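(* For every $n\ge 1$, the graph $\widehat{G}_n$ is connected, has maximum degree $3$, has $|V(\widehat{G}_n)| = 6\cdot 4^{n-1}$ vertices, and satisfies $$Z(\widehat{G}_n)\ \ge\ t_n+1=\frac{8\cdot 4^{n-1}+1}{3}\ =\ \Big(\frac49+\frac{1}{18\cdot 4^{n-1}}\Big)|V(\widehat{G}_n)|\ \ge\ \frac49\,|V(\widehat{G}_n)|.$$ In particular, the statement "$Z(G)\le \frac13|V(G)|+2$ for every connected graph $G$ of maximum degree $3$" is false.
   Context: Zero forcing: given a graph and a set $S$ of vertices initially colored black (all others white), repeatedly apply the rule: if a black vertex $v$ has exactly one white neighbor $u$, then $u$ becomes black. $S$ is a zero forcing set if eventually every vertex becomes black. $Z(G)$ is the minimum size of a zero forcing set of $G$. Subdivided $K_4$: the complete graph on 4 vertices $a,b,c,e$ with the edge $ab$ subdivided by a new vertex $s$ (5 vertices, edges $as, sb, ac, ae, bc, be, ce$); $s$ is its subdivision vertex. $B_d$ ($d\ge1$) is the complete binary tree with $2^d-1$ vertices and root $r$. $G_n$ ($n\ge1$): take $B_{2n-1}$ with root $r_n$, and for every leaf $\ell$ of $B_{2n-1}$ attach a new copy of the subdivided $K_4$ by identifying $\ell$ with its subdivision vertex. $\widehat{G}_n$ is obtained from $G_n$ by adding a new vertex $y_n$ adjacent only to $r_n$. $t_1=2$, $t_{n+1}=4t_n+2$ for $n\ge1$. *)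

theory Defs
  imports Complex_Main
begin

definition simple_graph :: "'a set \<Rightarrow> ('a \<Rightarrow> 'a \<Rightarrow> bool) \<Rightarrow> bool" where
  "simple_graph V E \<longleftrightarrow> finite V \<and> (\<forall>x y. E x y \<longrightarrow> x \<in> V \<and> y \<in> V)
     \<and> (\<forall>x y. E x y \<longrightarrow> E y x) \<and> (\<forall>x. \<not> E x x)"

definition connected_graph :: "'a set \<Rightarrow> ('a \<Rightarrow> 'a \<Rightarrow> bool) \<Rightarrow> bool" where
  "connected_graph V E \<longleftrightarrow> V \<noteq> {} \<and>
     (\<forall>u\<in>V. \<forall>v\<in>V. (\<lambda>x y. x \<in> V \<and> y \<in> V \<and> E x y)\<^sup>*\<^sup>* u v)"

definition degree :: "'a set \<Rightarrow> ('a \<Rightarrow> 'a \<Rightarrow> bool) \<Rightarrow> 'a \<Rightarrow> nat" where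
  "degree V E v = card {u \<in> V. E v u}"

definition max_degree :: "'a set \<Rightarrow> ('a \<Rightarrow> 'a \<Rightarrow> bool) \<Rightarrow> nat" where
  "max_degree V E = Max (degree V E ` V)"

definition force_step :: "'a set \<Rightarrow> ('a \<Rightarrow> 'a \<Rightarrow> bool) \<Rightarrow> 'a set \<Rightarrow> 'a set \<Rightarrow> bool" where
  "force_step V E B B' \<longleftrightarrow> (\<exists>v u. v \<in> B \<and> u \<in> V \<and> u \<notin> B \<and> E v u \<and>
      (\<forall>w\<in>V. E v w \<and> w \<notin> B \<longrightarrow> w = u) \<and> B' = insert u B)"

definition zero_forcing_set :: "'a set \<Rightarrow> ('a \<Rightarrow> 'a \<Rightarrow> bool) \<Rightarrow> 'a set \<Rightarrow> bool" where
  "zero_forcing_set V E S \<longleftrightarrow> S \<subseteq> V \<and> (force_step V E)\<^sup>*\<^sup>* S V"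

definition zero_forcing_number :: "'a set \<Rightarrow> ('a \<Rightarrow> 'a \<Rightarrow> bool) \<Rightarrow> nat" where
  "zero_forcing_number V E = (LEAST k. \<exists>S. zero_forcing_set V E S \<and> card S = k)"

text \<open>Labels of the non-subdivision vertices a, b, c, e of a subdivided K4.\<close>
datatype k4v = KA | KB | KC | KE

text \<open>Vertices: tree vertices of B_(2n-1) as binary words of length < 2n-1 (root = []),
  the four extra vertices of the K4 copy attached at leaf l, and the pendant vertex y.\<close>
datatype vtx = T "bool list" | K "bool list" k4v | Y

definition Ghat_V :: "nat \<Rightarrow> vtx set" where
  "Ghat_V n = {T w | w. length w < 2*n - 1} \<union> {K l k | l k. length l = 2*n - 2} \<union> {Y}"

definition Ghat_base_edge :: "nat \<Rightarrow> vtx \<Rightarrow> vtx \<Rightarrow> bool" where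
  "Ghat_base_edge n x y \<longleftrightarrow>
     (\<exists>w b. x = T w \<and> y = T (w @ [b]) \<and> length w + 1 < 2*n - 1) \<or>
     (\<exists>l. length l = 2*n - 2 \<and>
        (x, y) \<in> {(T l, K l KA), (T l, K l KB),
                   (K l KA, K l KC), (K l KA, K l KE), (K l KB, K l KC),
                   (K l KB, K l KE), (K l KC, K l KE)}) \<or>
     (x = Y \<and> y = T [])"

definition Ghat_E :: "nat \<Rightarrow> vtx \<Rightarrow> vtx \<Rightarrow> bool" where
  "Ghat_E n x y \<longleftrightarrow> Ghat_base_edge n x y \<or> Ghat_base_edge n y x"

text \<open>t_1 = 2, t_(n+1) = 4 t_n + 2 (value at 0 is an irrelevant extension).\<close>
primrec t :: "nat \<Rightarrow> nat" where
  "t 0 = 0"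
| "t (Suc n) = 4 * t n + 2"

end

theory Submission
  imports Defs
begin

lemma E_TT: "Ghat_E N (T w) (T w') \<longleftrightarrow>
   ((\<exists>b. w' = w@[b]) \<and> length w' < 2*N-1) \<or> ((\<exists>b. w = w'@[b]) \<and> length w < 2*N-1)"
  unfolding Ghat_E_def Ghat_base_edge_def by auto

lemma E_TK: "Ghat_E N (T w) (K l k) \<longleftrightarrow> l = w \<and> length w = 2*N-2 \<and> (k = KA \<or> k = KB)"
  unfolding Ghat_E_def Ghat_base_edge_def by auto
lemma E_KT: "Ghat_E N (K l k) (T w) \<longleftrightarrow> l = w \<and> length w = 2*N-2 \<and> (k = KA \<or> k = KB)"
  unfolding Ghat_E_def Ghat_base_edge_def by auto
lemma E_KK: "Ghat_E N (K l k) (K l' k') \<longleftrightarrow> l = l' \<and> length l = 2*N-2 \<and>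
   ((k,k') \<in> {(KA,KC),(KC,KA),(KA,KE),(KE,KA),(KB,KC),(KC,KB),(KB,KE),(KE,KB),(KC,KE),(KE,KC)})"
  unfolding Ghat_E_def Ghat_base_edge_def by auto
lemma E_Y1: "Ghat_E N Y x \<longleftrightarrow> x = T []"
  unfolding Ghat_E_def Ghat_base_edge_def by auto
lemma E_Y2: "Ghat_E N x Y \<longleftrightarrow> x = T []"
  unfolding Ghat_E_def Ghat_base_edge_def by auto

lemmas E_simps = E_TT E_TK E_KT E_KK E_Y1 E_Y2

lemma V_T: "T w \<in> Ghat_V N \<longleftrightarrow> length w < 2*N-1" unfolding Ghat_V_def by auto
lemma V_K: "K l k \<in> Ghat_V N \<longleftrightarrow> length l = 2*N-2" unfolding Ghat_V_def by auto
lemma V_Y: "Y \<in> Ghat_V N" unfolding Ghat_V_def by auto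
lemmas V_simps = V_T V_K V_Y

lemma E_sym: "Ghat_E N x y \<Longrightarrow> Ghat_E N y x" unfolding Ghat_E_def by auto

lemma E_V: assumes "N \<ge> 1" "Ghat_E N x y" shows "x \<in> Ghat_V N \<and> y \<in> Ghat_V N"
  using assms by (cases x; cases y; auto simp: E_simps V_simps)



definition fortg :: "nat \<Rightarrow> vtx set \<Rightarrow> bool" where
  "fortg N F \<longleftrightarrow> F \<subseteq> Ghat_V N \<and> F \<noteq> {} \<and>
     (\<forall>v\<in>Ghat_V N - F. \<forall>u\<in>F. Ghat_E N v u \<longrightarrow> (\<exists>u'\<in>F. u' \<noteq> u \<and> Ghat_E N v u'))"

lemma fort_step:
  assumes "force_step (Ghat_V N) (Ghat_E N) B B'" "fortg N F" "B \<inter> F = {}" "N \<ge> 1"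
  shows "B' \<inter> F = {}"
proof -
  from assms(1) obtain v u where h: "v \<in> B" "u \<in> Ghat_V N" "u \<notin> B" "Ghat_E N v u"
    "\<forall>w\<in>Ghat_V N. Ghat_E N v w \<and> w \<notin> B \<longrightarrow> w = u" "B' = insert u B"
    unfolding force_step_def by blast
  have "u \<notin> F"
  proof
    assume uF: "u \<in> F"
    have "v \<notin> F" using h(1) assms(3) by blast
    have "v \<in> Ghat_V N" using h(4) E_V assms(4) by blast
    then obtain u' where "u' \<in> F" "u' \<noteq> u" "Ghat_E N v u'"
      using assms(2) uF \<open>v \<notin> F\<close> h(4) unfolding fortg_def by blast
    moreover have "u' \<in> Ghat_V N" "u' \<notin> B" using assms(2,3) \<open>u' \<in> F\<close> unfolding fortg_def by auto
    ultimately show False using h(5) by blast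
  qed
  then show ?thesis using h(6) assms(3) by blast
qed

lemma zfs_hits:
  assumes "zero_forcing_set (Ghat_V N) (Ghat_E N) S" "fortg N F" "N \<ge> 1"
  shows "S \<inter> F \<noteq> {}"
proof
  assume a: "S \<inter> F = {}"
  have "(force_step (Ghat_V N) (Ghat_E N))\<^sup>*\<^sup>* S (Ghat_V N)" using assms(1) unfolding zero_forcing_set_def by blast
  then have "Ghat_V N \<inter> F = {}"
    by (induction rule: rtranclp_induct) (use a fort_step assms(2,3) in auto)
  then show False using assms(2) unfolding fortg_def by blast
qed

definition sub :: "nat \<Rightarrow> bool list \<Rightarrow> vtx set" where
  "sub N g = {x \<in> Ghat_V N. case x of T w \<Rightarrow> (\<exists>u. w = g@u) | K l k \<Rightarrow> (\<exists>u. l = g@u) | Y \<Rightarrow> False}"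

definition Af where "Af N g F \<longleftrightarrow> fortg N F \<and> F \<subseteq> sub N g \<and> T g \<notin> F"
definition Bf where "Bf N g F \<longleftrightarrow> F \<subseteq> sub N g \<and> T g \<in> F \<and>
  (\<forall>v\<in>sub N g - F. \<forall>u\<in>F. Ghat_E N v u \<longrightarrow> (\<exists>u'\<in>F. u' \<noteq> u \<and> Ghat_E N v u'))"

lemma sub_T: "T w \<in> sub N g \<longleftrightarrow> length w < 2*N-1 \<and> (\<exists>u. w = g@u)"
  unfolding sub_def by (auto simp: V_simps)
lemma sub_K: "K l k \<in> sub N g \<longleftrightarrow> length l = 2*N-2 \<and> (\<exists>u. l = g@u)"
  unfolding sub_def by (auto simp: V_simps)
lemma sub_Y: "Y \<notin> sub N g"
  unfolding sub_def by (auto simp: V_simps)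
lemmas sub_simps = sub_T sub_K sub_Y

lemma sub_V: "sub N g \<subseteq> Ghat_V N" unfolding sub_def by auto

lemma nb_in: assumes "N \<ge> 1" "v \<in> sub N g" "Ghat_E N v u" "v \<noteq> T g" shows "u \<in> sub N g"
proof -
  have uV: "u \<in> Ghat_V N" using E_V[OF assms(1,3)] by auto
  show ?thesis
  proof (cases v)
    case (T w)
    then obtain x where x: "w = g@x" "x \<noteq> []" using assms(2,4) by (auto simp: sub_simps)
    show ?thesis
    proof (cases u)
      case (T w')
      with assms(3) \<open>v = T w\<close> have "(\<exists>b. w' = w@[b]) \<or> (\<exists>b. w = w'@[b])" by (auto simp: E_simps)
      then show ?thesis
      proof
        assume "\<exists>b. w' = w@[b]" then show ?thesis using uV T x by (auto simp: sub_simps V_simps)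
      next
        assume "\<exists>b. w = w'@[b]"
        then obtain b where "g@x = w'@[b]" using x by auto
        then have "w' = g @ butlast x" using x(2) by (metis butlast_append butlast_snoc)
        then show ?thesis using uV T by (auto simp: sub_simps V_simps)
      qed
    next
      case (K l k) then show ?thesis using assms(3) uV \<open>v = T w\<close> x by (auto simp: E_simps sub_simps V_simps)
    next
      case Y then show ?thesis using assms(3) \<open>v = T w\<close> x by (auto simp: E_simps)
    qed
  next
    case (K l k)
    then show ?thesis using assms uV by (cases u) (auto simp: E_simps sub_simps V_simps)
  next
    case Y then show ?thesis using assms(2) by (simp add: sub_simps)
  qed
qed

lemma parent_nb: assumes "N \<ge> 1" "Ghat_E N v (T (g@[b]))" "v \<notin> sub N (g@[b])" shows "v = T g"
proof -
  have vV: "v \<in> Ghat_V N" using E_V[OF assms(1,2)] by auto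
  show ?thesis using assms vV by (cases v) (auto simp: E_simps sub_simps V_simps)
qed

lemma root_nb: assumes "N \<ge> 1" "Ghat_E N v (T w)" "v \<in> sub N w" "length w < 2*N-2"
  shows "\<exists>c. v = T (w@[c])"
  using assms by (cases v) (auto simp: E_simps sub_simps V_simps)



lemma Bf_nb:
  assumes N: "N \<ge> 1" and B: "Bf N g B" and uB: "u \<in> B" and vE: "Ghat_E N v u" and vB: "v \<notin> B"
    and vV: "v \<in> Ghat_V N"
  shows "(\<exists>u'\<in>B. u' \<noteq> u \<and> Ghat_E N v u') \<or> (v \<notin> sub N g \<and> u = T g)"
proof (cases "v \<in> sub N g")
  case True
  then show ?thesis using B uB vE vB unfolding Bf_def by blast
next
  case False
  have "u \<in> sub N g" using B uB unfolding Bf_def by blast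
  moreover have "u = T g"
  proof (rule ccontr)
    assume "u \<noteq> T g"
    then have "v \<in> sub N g" using nb_in[OF N \<open>u \<in> sub N g\<close> E_sym[OF vE]] by blast
    then show False using False by blast
  qed
  ultimately show ?thesis using False by blast
qed

lemma pair_fort:
  assumes N: "N \<ge> 1" and len: "length w + 2 \<le> 2*N-2"
    and B1: "Bf N (w@[b,False]) B1" and B2: "Bf N (w@[b,True]) B2"
  shows "Af N w (B1 \<union> B2)"
proof -
  have s1: "sub N (w@[b,c]) \<subseteq> sub N w" for c
    unfolding sub_def by (auto split: vtx.splits)
  have T1: "T (w@[b,False]) \<in> B1" using B1 unfolding Bf_def by blast
  have T2: "T (w@[b,True]) \<in> B2" using B2 unfolding Bf_def by blast
  have Esib: "Ghat_E N (T (w@[b])) (T (w@[b,c]))" for c using len by (auto simp: E_simps)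
  have "B1 \<subseteq> sub N (w@[b,False])" using B1 unfolding Bf_def by blast
  then have sub1a: "B1 \<subseteq> sub N w" using s1[of False] by blast
  have "B2 \<subseteq> sub N (w@[b,True])" using B2 unfolding Bf_def by blast
  then have sub1b: "B2 \<subseteq> sub N w" using s1[of True] by blast
  note sub1 = sub1a sub1b
  have Tw: "T w \<notin> sub N (w@[b,c])" for c by (auto simp: sub_simps)
  have "T w \<notin> B1 \<union> B2" using B1 B2 Tw unfolding Bf_def by blast
  moreover have "fortg N (B1 \<union> B2)"
    unfolding fortg_def
  proof (intro conjI ballI impI)
    show "B1 \<union> B2 \<subseteq> Ghat_V N" using sub1 sub_V by blast
    show "B1 \<union> B2 \<noteq> {}" using T1 by blast
  next
    fix v u assume v: "v \<in> Ghat_V N - (B1 \<union> B2)" and u: "u \<in> B1 \<union> B2" and e: "Ghat_E N v u"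
    show "\<exists>u'\<in>B1 \<union> B2. u' \<noteq> u \<and> Ghat_E N v u'"
    proof (cases "u \<in> B1")
      case True
      from Bf_nb[OF N B1 True e] v consider "\<exists>u'\<in>B1. u' \<noteq> u \<and> Ghat_E N v u'"
        | "v \<notin> sub N (w@[b,False]) \<and> u = T (w@[b,False])" by blast
      then show ?thesis
      proof cases
        case 2
        then have "v = T (w@[b])" using parent_nb[OF N, of v "w@[b]" False] e by simp
        then show ?thesis using 2 T2 Esib[of True] by (intro bexI[of _ "T (w@[b,True])"]) auto
      qed blast
    next
      case False
      then have uB2: "u \<in> B2" using u by blast
      from Bf_nb[OF N B2 uB2 e] v consider "\<exists>u'\<in>B2. u' \<noteq> u \<and> Ghat_E N v u'"
        | "v \<notin> sub N (w@[b,True]) \<and> u = T (w@[b,True])" by blast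
      then show ?thesis
      proof cases
        case 2
        then have "v = T (w@[b])" using parent_nb[OF N, of v "w@[b]" True] e by simp
        then show ?thesis using 2 T1 Esib[of False] by (intro bexI[of _ "T (w@[b,False])"]) auto
      qed blast
    qed
  qed
  ultimately show ?thesis unfolding Af_def using sub1 by blast
qed

lemma root_fort:
  assumes N: "N \<ge> 1" and len: "length w + 2 \<le> 2*N-2"
    and B1: "Bf N (w@[False,c]) B1" and B3: "Bf N (w@[True,d]) B3"
  shows "Bf N w (insert (T w) (B1 \<union> B3))"
proof -
  have s1: "sub N (w@[b,e]) \<subseteq> sub N w" for b e
    unfolding sub_def by (auto split: vtx.splits)
  have T1: "T (w@[False,c]) \<in> B1" using B1 unfolding Bf_def by blast
  have T3: "T (w@[True,d]) \<in> B3" using B3 unfolding Bf_def by blast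
  have Epar: "Ghat_E N (T (w@[b])) (T w)" for b
  proof -
    have "length (w@[b]) < 2*N-1" using len by simp
    then show ?thesis unfolding E_TT by blast
  qed
  have Ech: "Ghat_E N (T (w@[b])) (T (w@[b,e]))" for b e
  proof -
    have "length (w@[b,e]) < 2*N-1" using len by simp
    then show ?thesis unfolding E_TT by simp
  qed
  have Twsub: "T w \<in> sub N w"
  proof -
    have "length w < 2*N-1" using len by simp
    then show ?thesis unfolding sub_T by simp
  qed
  have "B1 \<subseteq> sub N (w@[False,c])" using B1 unfolding Bf_def by blast
  then have sub1a: "B1 \<subseteq> sub N w" using s1[of False c] by blast
  have "B3 \<subseteq> sub N (w@[True,d])" using B3 unfolding Bf_def by blast
  then have sub1b: "B3 \<subseteq> sub N w" using s1[of True d] by blast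
  note sub1 = sub1a sub1b
  show ?thesis unfolding Bf_def
  proof (intro conjI ballI impI)
    show "insert (T w) (B1 \<union> B3) \<subseteq> sub N w" using sub1 Twsub by blast
    show "T w \<in> insert (T w) (B1 \<union> B3)" by blast
  next
    fix v u assume v: "v \<in> sub N w - insert (T w) (B1 \<union> B3)" and u: "u \<in> insert (T w) (B1 \<union> B3)"
      and e: "Ghat_E N v u"
    have vV: "v \<in> Ghat_V N" using v sub_V by blast
    show "\<exists>u'\<in>insert (T w) (B1 \<union> B3). u' \<noteq> u \<and> Ghat_E N v u'"
    proof (cases "u = T w")
      case True
      have "v \<in> sub N w" using v by blast
      moreover have "Ghat_E N v (T w)" using e True by simp
      moreover have "length w < 2*N-2" using len by simp
      ultimately obtain b where vb: "v = T (w@[b])" using root_nb[OF N] by blast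
      show ?thesis
      proof (cases b)
        case True
        then have vb': "v = T (w@[True])" using vb by simp
        show ?thesis using T3 Ech[of True d] \<open>u = T w\<close> vb' by (intro bexI[of _ "T (w@[True,d])"]) auto
      next
        case False
        then have vb': "v = T (w@[False])" using vb by simp
        show ?thesis using T1 Ech[of False c] \<open>u = T w\<close> vb' by (intro bexI[of _ "T (w@[False,c])"]) auto
      qed
    next
      case uTw: False
      show ?thesis
      proof (cases "u \<in> B1")
        case True
        from Bf_nb[OF N B1 True e] v vV consider "\<exists>u'\<in>B1. u' \<noteq> u \<and> Ghat_E N v u'"
          | "v \<notin> sub N (w@[False,c]) \<and> u = T (w@[False,c])" by blast
        then show ?thesis
        proof cases
          case 2
          then have "v = T (w@[False])" using parent_nb[OF N, of v "w@[False]" c] e by simp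
          then show ?thesis using 2 Epar[of False] by (intro bexI[of _ "T w"]) auto
        qed blast
      next
        case False
        then have uB3: "u \<in> B3" using u uTw by blast
        from Bf_nb[OF N B3 uB3 e] v vV consider "\<exists>u'\<in>B3. u' \<noteq> u \<and> Ghat_E N v u'"
          | "v \<notin> sub N (w@[True,d]) \<and> u = T (w@[True,d])" by blast
        then show ?thesis
        proof cases
          case 2
          then have "v = T (w@[True])" using parent_nb[OF N, of v "w@[True]" d] e by simp
          then show ?thesis using 2 Epar[of True] by (intro bexI[of _ "T w"]) auto
        qed blast
      qed
    qed
  qed
qed

lemma s1: "sub N (w@[b,c]) \<subseteq> sub N w"
    unfolding sub_def by (auto split: vtx.splits)
lemma Af_mono: assumes "Af N (w@[b,c]) F" shows "Af N w F"
proof -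
  have "T w \<notin> sub N (w@[b,c])" by (auto simp: sub_simps)
  then show ?thesis using assms s1[of N w b c] unfolding Af_def by blast
qed



lemma sub_base: assumes "length w = 2*N-2" "N \<ge> 1"
  shows "sub N w = {T w, K w KA, K w KB, K w KC, K w KE}"
proof (rule set_eqI)
  fix x show "x \<in> sub N w \<longleftrightarrow> x \<in> {T w, K w KA, K w KB, K w KC, K w KE}"
  proof (cases x)
    case (T w') then show ?thesis using assms by (auto simp: sub_simps) (cases N; simp)
  next
    case (K l k) then show ?thesis using assms by (cases k; auto simp: sub_simps; cases N; simp)
  next
    case Y then show ?thesis by (simp add: sub_simps)
  qed
qed

lemma fort2:
  assumes "F = {p, q}" "p \<noteq> q" "F \<subseteq> Ghat_V N"
    "\<And>v. v \<notin> F \<Longrightarrow> Ghat_E N v p \<Longrightarrow> Ghat_E N v q"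
    "\<And>v. v \<notin> F \<Longrightarrow> Ghat_E N v q \<Longrightarrow> Ghat_E N v p"
  shows "fortg N F"
  unfolding fortg_def
proof (intro conjI ballI impI)
  show "F \<subseteq> Ghat_V N" by fact
  show "F \<noteq> {}" using assms(1) by simp
next
  fix v u assume v: "v \<in> Ghat_V N - F" and u: "u \<in> F" and e: "Ghat_E N v u"
  from u assms(1) have "u = p \<or> u = q" by simp
  then show "\<exists>u'\<in>F. u' \<noteq> u \<and> Ghat_E N v u'"
  proof
    assume "u = p" then show ?thesis using assms(1,2,4) v e by (intro bexI[of _ q]) auto
  next
    assume "u = q" then show ?thesis using assms(1,2,5) v e by (intro bexI[of _ p]) auto
  qed
qed

lemma A_ab: assumes "length w = 2*N-2" "N \<ge> 1" shows "Af N w {K w KA, K w KB}"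
proof -
  have "fortg N {K w KA, K w KB}"
  proof (rule fort2[OF refl])
    show "{K w KA, K w KB} \<subseteq> Ghat_V N" using assms by (simp add: V_simps)
  next
    fix v assume "v \<notin> {K w KA, K w KB}" "Ghat_E N v (K w KA)"
    then show "Ghat_E N v (K w KB)" by (cases v; simp add: E_simps; metis k4v.exhaust)
  next
    fix v assume "v \<notin> {K w KA, K w KB}" "Ghat_E N v (K w KB)"
    then show "Ghat_E N v (K w KA)" by (cases v; simp add: E_simps; metis k4v.exhaust)
  qed simp
  then show ?thesis unfolding Af_def using sub_base[OF assms] by auto
qed

lemma A_ce: assumes "length w = 2*N-2" "N \<ge> 1" shows "Af N w {K w KC, K w KE}"
proof -
  have "fortg N {K w KC, K w KE}"
  proof (rule fort2[OF refl])
    show "{K w KC, K w KE} \<subseteq> Ghat_V N" using assms by (simp add: V_simps)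
  next
    fix v assume "v \<notin> {K w KC, K w KE}" "Ghat_E N v (K w KC)"
    then show "Ghat_E N v (K w KE)" by (cases v; simp add: E_simps; metis k4v.exhaust)
  next
    fix v assume "v \<notin> {K w KC, K w KE}" "Ghat_E N v (K w KE)"
    then show "Ghat_E N v (K w KC)" by (cases v; simp add: E_simps; metis k4v.exhaust)
  qed simp
  then show ?thesis unfolding Af_def using sub_base[OF assms] by auto
qed

lemma B_base: assumes "length w = 2*N-2" "N \<ge> 1" "x \<in> {KA,KB}" "z \<in> {KC,KE}"
  shows "Bf N w {T w, K w x, K w z}"
  unfolding Bf_def sub_base[OF assms(1,2)]
  using assms(3,4) by (elim insertE; auto simp: E_simps assms(1))



lemma finite_bl: "finite {w::bool list. length w < n}"
proof -
  have "{w::bool list. length w < n} \<subseteq> {xs. set xs \<subseteq> UNIV \<and> length xs \<le> n}" by auto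
  moreover have "finite {xs::bool list. set xs \<subseteq> UNIV \<and> length xs \<le> n}"
    by (rule finite_lists_length_le) simp
  ultimately show ?thesis by (rule finite_subset)
qed

lemma finite_bl_eq: "finite {w::bool list. length w = n}"
  by (rule finite_subset[OF _ finite_bl[of "Suc n"]]) auto

lemma k4v_UNIV: "(UNIV :: k4v set) = {KA,KB,KC,KE}"
  using k4v.exhaust by auto

lemma finite_k4v: "finite (UNIV :: k4v set)" by (subst k4v_UNIV) simp

lemma finV: "finite (Ghat_V N)"
proof -
  have "Ghat_V N = T ` {w. length w < 2*N-1} \<union> (\<lambda>(l,k). K l k) ` ({l. length l = 2*N-2} \<times> UNIV) \<union> {Y}"
    unfolding Ghat_V_def by auto
  moreover have "finite ({l::bool list. length l = 2*N-2} \<times> (UNIV :: k4v set))"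
    using finite_bl_eq[of "2*N-2"] finite_k4v by (intro finite_cartesian_product) simp_all
  ultimately show ?thesis using finite_bl by simp
qed

definition hitsA where "hitsA N S w \<longleftrightarrow> (\<forall>F. Af N w F \<longrightarrow> S \<inter> F \<noteq> {})"
definition good where "good N S w \<longleftrightarrow> (\<forall>F. Bf N w F \<longrightarrow> S \<inter> F \<noteq> {})"

lemma fin_Ssub: "finite (S \<inter> sub N w)"
  using finV sub_V by (meson finite_Int finite_subset)

lemma base_count:
  assumes N: "N \<ge> 1" and len: "length w = 2*N-2" and hA: "hitsA N S w"
  shows "2 \<le> card (S \<inter> sub N w) \<and> (good N S w \<longrightarrow> 3 \<le> card (S \<inter> sub N w))"
proof -
  have sb: "sub N w = {T w, K w KA, K w KB, K w KC, K w KE}" using sub_base[OF len N] .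
  obtain p where p: "p \<in> S" "p \<in> {K w KA, K w KB}" using hA A_ab[OF len N] unfolding hitsA_def by blast
  obtain q where q: "q \<in> S" "q \<in> {K w KC, K w KE}" using hA A_ce[OF len N] unfolding hitsA_def by blast
  have fin: "finite (S \<inter> sub N w)" by (rule fin_Ssub)
  have psK: "K w k \<in> sub N w" for k by (cases k) (simp_all add: sb)
  have psT: "T w \<in> sub N w" by (simp add: sb)
  have "p \<in> sub N w" "q \<in> sub N w" using psK p(2) q(2) by auto
  note ps = this psT psK
  have pne: "p \<noteq> T w" "q \<noteq> T w" "p \<noteq> q" "p \<noteq> K w KC" "p \<noteq> K w KE" "q \<noteq> K w KA" "q \<noteq> K w KB"
    using p(2) q(2) by auto
  have "{p,q} \<subseteq> S \<inter> sub N w" using p q sb by auto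
  moreover have "card {p,q} = 2" using p(2) q(2) by auto
  ultimately have c2: "2 \<le> card (S \<inter> sub N w)" by (metis card_mono fin)
  have c3: "3 \<le> card (S \<inter> sub N w)" if g: "good N S w"
  proof -
    have "\<exists>X. X \<subseteq> S \<inter> sub N w \<and> card X = 3"
    proof (cases "T w \<in> S")
      case True
      have "{T w, p, q} \<subseteq> S \<inter> sub N w" using True p q ps by blast
      moreover have "card {T w, p, q} = 3" using pne by simp
      ultimately show ?thesis by blast
    next
      case False
      have h: "K w x \<in> S \<or> K w z \<in> S" if "x \<in> {KA,KB}" "z \<in> {KC,KE}" for x z
        using g B_base[OF len N that] False unfolding good_def by blast
      show ?thesis
      proof (cases "K w KA \<in> S \<and> K w KB \<in> S")
        case True
        have "{K w KA, K w KB, q} \<subseteq> S \<inter> sub N w" using True q ps by blast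
        moreover have "card {K w KA, K w KB, q} = 3" using pne by auto
        ultimately show ?thesis by blast
      next
        case False
        then obtain x where x: "x \<in> {KA,KB}" "K w x \<notin> S" by auto
        then have "K w KC \<in> S" "K w KE \<in> S" using h[of x KC] h[of x KE] by auto
        have "{p, K w KC, K w KE} \<subseteq> S \<inter> sub N w" using p ps \<open>K w KC \<in> S\<close> \<open>K w KE \<in> S\<close> by blast
        moreover have "card {p, K w KC, K w KE} = 3" using pne by auto
        ultimately show ?thesis by blast
      qed
    qed
    then show ?thesis using fin by (metis card_mono)
  qed
  show ?thesis using c2 c3 by blast
qed

lemma sub_disj: assumes "(b,c) \<noteq> (b',c')" shows "sub N (w@[b,c]) \<inter> sub N (w@[b',c']) = {}"
proof -
  have l: "w@[b,c]@u \<noteq> w@[b',c']@u'" for u u' using assms by auto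
  show ?thesis
  proof (rule ccontr)
    assume "sub N (w@[b,c]) \<inter> sub N (w@[b',c']) \<noteq> {}"
    then obtain x where "x \<in> sub N (w@[b,c])" "x \<in> sub N (w@[b',c'])" by blast
    then show False using l by (cases x) (auto simp: sub_simps)
  qed
qed

lemma Tw_nsub: "T w \<notin> sub N (w@[b,c])" "T (w@[b']) \<notin> sub N (w@[b,c])"
  by (auto simp: sub_simps)



lemma main_ind:
  assumes N: "N \<ge> 1"
  shows "1 \<le> m \<Longrightarrow> m \<le> N \<Longrightarrow> length w = 2*(N-m) \<Longrightarrow> hitsA N S w \<Longrightarrow>
    t m \<le> card (S \<inter> sub N w) \<and> (good N S w \<longrightarrow> t m + 1 \<le> card (S \<inter> sub N w))"
proof (induction m arbitrary: w rule: nat_induct_at_least)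
  case base
  have len: "length w = 2*N-2" using base by simp
  show ?case using base_count[OF N len base(3)] by (simp add: eval_nat_numeral)
next
  case (Suc m)
  define g where "g b c = w@[b,c]" for b c
  have lenw: "length w + 2 \<le> 2*N-2" using Suc.prems Suc.hyps by simp
  have leng: "length (g b c) = 2*(N-m)" for b c using Suc.prems unfolding g_def by simp
  have hAg: "hitsA N S (g b c)" for b c
    using Suc.prems(3) Af_mono unfolding hitsA_def g_def by blast
  have IH: "t m \<le> card (S \<inter> sub N (g b c)) \<and> (good N S (g b c) \<longrightarrow> t m + 1 \<le> card (S \<inter> sub N (g b c)))" for b c
    using Suc.IH[OF _ leng hAg] Suc.prems by simp
  have pairgood: "good N S (g b False) \<or> good N S (g b True)" for b
  proof (rule ccontr)
    assume "\<not> ?thesis"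
    then obtain B1 B2 where "Bf N (w@[b,False]) B1" "S \<inter> B1 = {}" "Bf N (w@[b,True]) B2" "S \<inter> B2 = {}"
      unfolding good_def g_def by blast
    moreover from this have "Af N w (B1 \<union> B2)" using pair_fort[OF N lenw] by blast
    ultimately show False using Suc.prems(3) unfolding hitsA_def by blast
  qed
  define Q where "Q b c = S \<inter> sub N (g b c)" for b c
  define P where "P = S \<inter> {T w, T (w@[False]), T (w@[True])}"
  have pair: "2 * t m + 1 \<le> card (Q b False) + card (Q b True)" for b
    using IH[of b False] IH[of b True] pairgood[of b] unfolding Q_def by auto
  have finQ: "finite (Q b c)" for b c unfolding Q_def by (rule fin_Ssub)
  have finP: "finite P" unfolding P_def by simp
  have dQ: "Q b c \<inter> Q b' c' = {}" if "(b,c) \<noteq> (b',c')" for b c b' c'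
    using sub_disj[OF that, of N w] unfolding Q_def g_def by blast
  have dP: "P \<inter> Q b c = {}" for b c
    using Tw_nsub unfolding P_def Q_def g_def by auto
  have cardU: "card (P \<union> (Q False False \<union> Q False True) \<union> (Q True False \<union> Q True True)) =
      card P + (card (Q False False) + card (Q False True)) + (card (Q True False) + card (Q True True))"
  proof -
    have c1: "card (Q b False \<union> Q b True) = card (Q b False) + card (Q b True)" for b
      by (rule card_Un_disjoint[OF finQ finQ]) (use dQ[of b False b True] in simp)
    have c2: "card (P \<union> (Q False False \<union> Q False True)) = card P + card (Q False False \<union> Q False True)"
      by (rule card_Un_disjoint) (use finP finQ dP[of False False] dP[of False True] in auto)
    have c3: "card (P \<union> (Q False False \<union> Q False True) \<union> (Q True False \<union> Q True True)) =
       card (P \<union> (Q False False \<union> Q False True)) + card (Q True False \<union> Q True True)"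
    proof (rule card_Un_disjoint)
      show "finite (P \<union> (Q False False \<union> Q False True))" using finP finQ by simp
      show "finite (Q True False \<union> Q True True)" using finQ by simp
      show "(P \<union> (Q False False \<union> Q False True)) \<inter> (Q True False \<union> Q True True) = {}"
        using dP dQ[of False False True False] dQ[of False False True True]
          dQ[of False True True False] dQ[of False True True True] by blast
    qed
    show ?thesis using c1 c2 c3 by simp
  qed
  have subU: "P \<union> (Q False False \<union> Q False True) \<union> (Q True False \<union> Q True True) \<subseteq> S \<inter> sub N w"
  proof -
    have "T w \<in> sub N w" "T (w@[b]) \<in> sub N w" for b using lenw by (simp_all add: sub_T)
    then have "P \<subseteq> S \<inter> sub N w" unfolding P_def by blast
    moreover have "Q b c \<subseteq> S \<inter> sub N w" for b c unfolding Q_def g_def using s1 by blast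
    ultimately show ?thesis by blast
  qed
  have cle: "card P + (card (Q False False) + card (Q False True)) + (card (Q True False) + card (Q True True))
      \<le> card (S \<inter> sub N w)"
    using card_mono[OF fin_Ssub subU] cardU by simp
  have tS: "t (Suc m) = 4 * t m + 2" by simp
  have A: "t (Suc m) \<le> card (S \<inter> sub N w)"
    using cle pair[of False] pair[of True] tS by linarith
  have B: "t (Suc m) + 1 \<le> card (S \<inter> sub N w)" if gw: "good N S w"
  proof (cases "P = {}")
    case False
    then have "1 \<le> card P" using finP by (simp add: Suc_le_eq card_gt_0_iff)
    then show ?thesis using cle pair[of False] pair[of True] tS by linarith
  next
    case True
    then have TwS: "T w \<notin> S" unfolding P_def by blast
    show ?thesis
    proof (cases "\<exists>b. good N S (g b False) \<and> good N S (g b True)")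
      case True
      then obtain b where "good N S (g b False)" "good N S (g b True)" by blast
      then have "2 * t m + 2 \<le> card (Q b False) + card (Q b True)"
        using IH[of b False] IH[of b True] unfolding Q_def by auto
      then have "2 * t m + 2 \<le> card (Q False False) + card (Q False True) \<or>
                 2 * t m + 2 \<le> card (Q True False) + card (Q True True)" by (cases b) simp_all
      then show ?thesis using cle pair[of False] pair[of True] tS by linarith
    next
      case False
      then obtain c d where "\<not> good N S (g False c)" "\<not> good N S (g True d)"
        using pairgood by (metis (full_types))
      then obtain B1 B3 where "Bf N (w@[False,c]) B1" "S \<inter> B1 = {}" "Bf N (w@[True,d]) B3" "S \<inter> B3 = {}"
        unfolding good_def g_def by blast
      moreover from this have "Bf N w (insert (T w) (B1 \<union> B3))" using root_fort[OF N lenw] by blast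
      ultimately show ?thesis using gw TwS unfolding good_def by blast
    qed
  qed
  show ?case using A B by blast
qed



lemma V_sub_root: "x \<in> Ghat_V N \<Longrightarrow> x \<noteq> Y \<Longrightarrow> x \<in> sub N []"
  by (cases x) (simp_all add: sub_simps V_simps)

lemma zf_lower:
  assumes N: "N \<ge> 1" and S: "zero_forcing_set (Ghat_V N) (Ghat_E N) S"
  shows "t N + 1 \<le> card S"
proof -
  have SV: "S \<subseteq> Ghat_V N" using S unfolding zero_forcing_set_def by blast
  have finS: "finite S" using finite_subset[OF SV finV] .
  have hA: "hitsA N S []" unfolding hitsA_def Af_def using zfs_hits[OF S _ N] by blast
  have M: "t N \<le> card (S \<inter> sub N []) \<and> (good N S [] \<longrightarrow> t N + 1 \<le> card (S \<inter> sub N []))"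
    using main_ind[OF N, of N "[]" S] N hA by simp
  show ?thesis
  proof (cases "Y \<in> S")
    case True
    have "insert Y (S \<inter> sub N []) \<subseteq> S" using True by blast
    then have "card (insert Y (S \<inter> sub N [])) \<le> card S" using finS by (rule card_mono[rotated])
    moreover have "card (insert Y (S \<inter> sub N [])) = card (S \<inter> sub N []) + 1"
      using fin_Ssub[of S N "[]"] sub_Y[of N "[]"] by simp
    ultimately show ?thesis using M by linarith
  next
    case False
    have "good N S []" unfolding good_def
    proof (intro allI impI)
      fix F assume B: "Bf N [] F"
      have "fortg N (insert Y F)" unfolding fortg_def
      proof (intro conjI ballI impI)
        show "insert Y F \<subseteq> Ghat_V N" using B sub_V V_Y unfolding Bf_def by blast
        show "insert Y F \<noteq> {}" by simp
      next
        fix v u assume v: "v \<in> Ghat_V N - insert Y F" and u: "u \<in> insert Y F" and e: "Ghat_E N v u"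
        show "\<exists>u'\<in>insert Y F. u' \<noteq> u \<and> Ghat_E N v u'"
        proof (cases "u = Y")
          case True
          then have "v = T []" using e by (simp add: E_simps)
          then show ?thesis using v B unfolding Bf_def by simp
        next
          case False
          then have uF: "u \<in> F" using u by simp
          have "v \<in> sub N [] - F" using v V_sub_root by blast
          then show ?thesis using B uF e unfolding Bf_def by blast
        qed
      qed
      then have "S \<inter> insert Y F \<noteq> {}" using zfs_hits[OF S _ N] by blast
      then show "S \<inter> F \<noteq> {}" using False by blast
    qed
    then have "t N + 1 \<le> card (S \<inter> sub N [])" using M by blast
    moreover have "card (S \<inter> sub N []) \<le> card S" using finS by (simp add: card_mono)
    ultimately show ?thesis by linarith
  qed
qed

lemma zfn_lower:
  assumes N: "N \<ge> 1"
  shows "t N + 1 \<le> zero_forcing_number (Ghat_V N) (Ghat_E N)"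
proof -
  have ex: "\<exists>S. zero_forcing_set (Ghat_V N) (Ghat_E N) S \<and> card S = card (Ghat_V N)"
    unfolding zero_forcing_set_def by auto
  obtain S where "zero_forcing_set (Ghat_V N) (Ghat_E N) S"
    "card S = zero_forcing_number (Ghat_V N) (Ghat_E N)"
    using LeastI_ex[of "\<lambda>k. \<exists>S. zero_forcing_set (Ghat_V N) (Ghat_E N) S \<and> card S = k"] ex
    unfolding zero_forcing_number_def by blast
  then show ?thesis using zf_lower[OF N] by metis
qed



lemma simple: assumes N: "N \<ge> 1" shows "simple_graph (Ghat_V N) (Ghat_E N)"
proof -
  have "\<not> Ghat_E N x x" for x by (cases x) (simp_all add: E_simps)
  then show ?thesis unfolding simple_graph_def using finV E_V[OF N] E_sym by blast
qed

lemma rtranclp_sym: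
  assumes sym: "\<And>x y. R x y \<Longrightarrow> R y x" and "R\<^sup>*\<^sup>* a b" shows "R\<^sup>*\<^sup>* b a"
  using assms(2) by (induction rule: rtranclp_induct) (auto intro: converse_rtranclp_into_rtranclp sym)

lemma connected: assumes N: "N \<ge> 1" shows "connected_graph (Ghat_V N) (Ghat_E N)"
proof -
  define R where "R = (\<lambda>x y. x \<in> Ghat_V N \<and> y \<in> Ghat_V N \<and> Ghat_E N x y)"
  have symR: "R x y \<Longrightarrow> R y x" for x y unfolding R_def using E_sym by blast
  have RI: "Ghat_E N x y \<Longrightarrow> R x y" for x y unfolding R_def using E_V[OF N] by blast
  have Tw: "length w < 2*N-1 \<Longrightarrow> R\<^sup>*\<^sup>* (T []) (T w)" for w
  proof (induction w rule: rev_induct)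
    case Nil then show ?case by simp
  next
    case (snoc b w)
    then have "R\<^sup>*\<^sup>* (T []) (T w)" by simp
    moreover have "R (T w) (T (w@[b]))" using snoc.prems by (intro RI) (simp add: E_TT)
    ultimately show ?case by (rule rtranclp.rtrancl_into_rtrancl)
  qed
  have all: "R\<^sup>*\<^sup>* (T []) x" if x: "x \<in> Ghat_V N" for x
  proof (cases x)
    case (T w) then show ?thesis using Tw x by (simp add: V_simps)
  next
    case (K l k)
    then have ll: "length l = 2*N-2" using x by (simp add: V_simps)
    then have "length l < 2*N-1" using N by simp
    then have r: "R\<^sup>*\<^sup>* (T []) (T l)" using Tw by blast
    have a: "R\<^sup>*\<^sup>* (T []) (K l KA)" using r RI[of "T l" "K l KA"] ll by (simp add: E_simps)
    have b: "R\<^sup>*\<^sup>* (T []) (K l KB)" using r RI[of "T l" "K l KB"] ll by (simp add: E_simps)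
    have c: "R\<^sup>*\<^sup>* (T []) (K l KC)" using a RI[of "K l KA" "K l KC"] ll by (simp add: E_simps)
    have e: "R\<^sup>*\<^sup>* (T []) (K l KE)" using a RI[of "K l KA" "K l KE"] ll by (simp add: E_simps)
    show ?thesis using K a b c e by (cases k) simp_all
  next
    case Y then show ?thesis using RI[of "T []" Y] by (simp add: E_simps)
  qed
  show ?thesis unfolding connected_graph_def R_def[symmetric]
  proof (intro conjI ballI)
    show "Ghat_V N \<noteq> {}" using V_Y by blast
  next
    fix u v assume "u \<in> Ghat_V N" "v \<in> Ghat_V N"
    then show "R\<^sup>*\<^sup>* u v" using all rtranclp_sym[where R=R and a="T []" and b=u, OF symR] by (meson rtranclp_trans)
  qed
qed

lemma card3: "card {a,b,c} \<le> 3"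
  by (simp add: card_insert_if)

lemma deg_le: assumes N: "N \<ge> 1" and v: "v \<in> Ghat_V N" shows "degree (Ghat_V N) (Ghat_E N) v \<le> 3"
proof -
  have "\<exists>a b c. {u \<in> Ghat_V N. Ghat_E N v u} \<subseteq> {a,b,c}"
  proof (cases v)
    case (T w)
    define p where "p = (if w = [] then Y else T (butlast w))"
    have par: "Ghat_E N (T w) (T w') \<Longrightarrow> \<exists>b. w = w'@[b] \<Longrightarrow> T w' = p" for w'
      unfolding p_def by auto
    have par2: "Ghat_E N (T w) Y \<Longrightarrow> Y = p" unfolding p_def by (simp add: E_simps)
    show ?thesis
    proof (cases "length w = 2*N-2")
      case True
      have "{u \<in> Ghat_V N. Ghat_E N v u} \<subseteq> {K w KA, K w KB, p}"
      proof
        fix u assume u: "u \<in> {u \<in> Ghat_V N. Ghat_E N v u}"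
        show "u \<in> {K w KA, K w KB, p}"
        proof (cases u)
          case (T w')
          then show ?thesis using u True \<open>v = T w\<close> par[of w'] N by (auto simp: E_simps)
        next
          case (K l k) then show ?thesis using u \<open>v = T w\<close> by (auto simp: E_simps)
        next
          case Y then show ?thesis using u \<open>v = T w\<close> par2 by auto
        qed
      qed
      then show ?thesis by blast
    next
      case False
      have "{u \<in> Ghat_V N. Ghat_E N v u} \<subseteq> {T (w@[False]), T (w@[True]), p}"
      proof
        fix u assume u: "u \<in> {u \<in> Ghat_V N. Ghat_E N v u}"
        show "u \<in> {T (w@[False]), T (w@[True]), p}"
        proof (cases u)
          case (T w')
          show ?thesis
          proof (cases "\<exists>b. w = w'@[b]")
            case True then show ?thesis using u T \<open>v = T w\<close> par[of w'] by auto
          next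
            case False
            then obtain b where "w' = w@[b]" using u T \<open>v = T w\<close> by (auto simp: E_simps)
            then show ?thesis using T by (cases b) auto
          qed
        next
          case (K l k) then show ?thesis using u \<open>v = T w\<close> False by (auto simp: E_simps)
        next
          case Y then show ?thesis using u \<open>v = T w\<close> par2 by auto
        qed
      qed
      then show ?thesis by blast
    qed
  next
    case (K l k)
    show ?thesis
    proof (cases k)
      case KA
      have "{u \<in> Ghat_V N. Ghat_E N v u} \<subseteq> {T l, K l KC, K l KE}"
      proof
        fix u assume "u \<in> {u \<in> Ghat_V N. Ghat_E N v u}"
        then show "u \<in> {T l, K l KC, K l KE}" using K KA by (cases u) (auto simp: E_simps)
      qed
      then show ?thesis by blast
    next
      case KB
      have "{u \<in> Ghat_V N. Ghat_E N v u} \<subseteq> {T l, K l KC, K l KE}"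
      proof
        fix u assume "u \<in> {u \<in> Ghat_V N. Ghat_E N v u}"
        then show "u \<in> {T l, K l KC, K l KE}" using K KB by (cases u) (auto simp: E_simps)
      qed
      then show ?thesis by blast
    next
      case KC
      have "{u \<in> Ghat_V N. Ghat_E N v u} \<subseteq> {K l KA, K l KB, K l KE}"
      proof
        fix u assume "u \<in> {u \<in> Ghat_V N. Ghat_E N v u}"
        then show "u \<in> {K l KA, K l KB, K l KE}" using K KC by (cases u) (auto simp: E_simps)
      qed
      then show ?thesis by blast
    next
      case KE
      have "{u \<in> Ghat_V N. Ghat_E N v u} \<subseteq> {K l KA, K l KB, K l KC}"
      proof
        fix u assume "u \<in> {u \<in> Ghat_V N. Ghat_E N v u}"
        then show "u \<in> {K l KA, K l KB, K l KC}" using K KE by (cases u) (auto simp: E_simps)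
      qed
      then show ?thesis by blast
    qed
  next
    case Y
    have "{u \<in> Ghat_V N. Ghat_E N v u} \<subseteq> {T [], T [], T []}" using Y by (auto simp: E_simps)
    then show ?thesis by blast
  qed
  then obtain a b c where "{u \<in> Ghat_V N. Ghat_E N v u} \<subseteq> {a,b,c}" by blast
  then have "card {u \<in> Ghat_V N. Ghat_E N v u} \<le> card {a,b,c}" by (rule card_mono[rotated]) simp
  then show ?thesis unfolding degree_def using card3[of a b c] by linarith
qed

lemma deg_3: assumes N: "N \<ge> 1"
  shows "degree (Ghat_V N) (Ghat_E N) (K (replicate (2*N-2) False) KC) = 3"
proof -
  let ?l = "replicate (2*N-2) False"
  have "{u \<in> Ghat_V N. Ghat_E N (K ?l KC) u} = {K ?l KA, K ?l KB, K ?l KE}"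
  proof (rule set_eqI)
    fix u show "u \<in> {u \<in> Ghat_V N. Ghat_E N (K ?l KC) u} \<longleftrightarrow> u \<in> {K ?l KA, K ?l KB, K ?l KE}"
      by (cases u) (auto simp: E_simps V_simps)
  qed
  then show ?thesis unfolding degree_def by simp
qed

lemma maxdeg: assumes N: "N \<ge> 1" shows "max_degree (Ghat_V N) (Ghat_E N) = 3"
  unfolding max_degree_def
proof (rule Max_eqI)
  show "finite (degree (Ghat_V N) (Ghat_E N) ` Ghat_V N)" using finV by simp
  show "\<And>y. y \<in> degree (Ghat_V N) (Ghat_E N) ` Ghat_V N \<Longrightarrow> y \<le> 3" using deg_le[OF N] by blast
  have "K (replicate (2*N-2) False) KC \<in> Ghat_V N" by (simp add: V_simps)
  then show "3 \<in> degree (Ghat_V N) (Ghat_E N) ` Ghat_V N" using deg_3[OF N] by (metis image_eqI)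
qed



lemma card_bl_eq: "card {w::bool list. length w = n} = 2^n"
  using card_lists_length_eq[of "UNIV::bool set" n] by simp

lemma card_bl_lt: "card {w::bool list. length w < n} + 1 = 2^n"
proof (induction n)
  case 0 then show ?case by simp
next
  case (Suc n)
  have "{w::bool list. length w < Suc n} = {w. length w < n} \<union> {w. length w = n}" by auto
  moreover have "card ({w::bool list. length w < n} \<union> {w. length w = n}) =
     card {w::bool list. length w < n} + card {w::bool list. length w = n}"
    by (rule card_Un_disjoint) (auto simp: finite_bl finite_bl_eq)
  ultimately show ?case using Suc card_bl_eq[of n] by simp
qed

lemma cardV: assumes N: "N \<ge> 1" shows "card (Ghat_V N) = 6 * 4 ^ (N - 1)"
proof -
  define A where "A = T ` {w. length w < 2*N-1}"
  define B where "B = (\<lambda>(l,k). K l k) ` ({l. length l = 2*N-2} \<times> (UNIV::k4v set))"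
  have V: "Ghat_V N = A \<union> B \<union> {Y}" unfolding Ghat_V_def A_def B_def by auto
  have cA: "card A = card {w::bool list. length w < 2*N-1}"
    unfolding A_def by (rule card_image) (simp add: inj_on_def)
  have cB: "card B = 2^(2*N-2) * 4"
  proof -
    have "card B = card ({l::bool list. length l = 2*N-2} \<times> (UNIV::k4v set))"
      unfolding B_def by (rule card_image) (auto simp: inj_on_def)
    also have "\<dots> = 2^(2*N-2) * 4" by (simp add: card_cartesian_product card_bl_eq k4v_UNIV)
    finally show ?thesis .
  qed
  have fA: "finite A" unfolding A_def using finite_bl by simp
  have fB: "finite B" unfolding B_def using finite_bl_eq finite_k4v by simp
  have "card (A \<union> B \<union> {Y}) = card A + card B + 1"
  proof -
    have "card (A \<union> B) = card A + card B" by (rule card_Un_disjoint[OF fA fB]) (auto simp: A_def B_def)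
    moreover have "Y \<notin> A \<union> B" by (auto simp: A_def B_def)
    ultimately show ?thesis using fA fB by simp
  qed
  moreover have "card A + 1 = 2^(2*N-1)" using cA card_bl_lt by simp
  moreover obtain M where M: "N = Suc M" using N by (cases N) auto
  moreover have "(2::nat)^(2*M) = 4^M" by (simp add: power_mult)
  ultimately show ?thesis using V cB by simp
qed

lemma t_closed: "n \<ge> 1 \<Longrightarrow> 3 * (t n + 1) = 8 * 4^(n-1) + 1"
proof (induction n rule: nat_induct_at_least)
  case base then show ?case by simp
next
  case (Suc n)
  obtain k where k: "n = Suc k" using Suc.hyps by (cases n) auto
  show ?case using Suc.IH unfolding k by simp
qed

lemma part1: assumes n: "n \<ge> 1" shows
      "simple_graph (Ghat_V n) (Ghat_E n) \<and>
      connected_graph (Ghat_V n) (Ghat_E n) \<and>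
      max_degree (Ghat_V n) (Ghat_E n) = 3 \<and>
      card (Ghat_V n) = 6 * 4 ^ (n - 1) \<and>
      zero_forcing_number (Ghat_V n) (Ghat_E n) \<ge> t n + 1 \<and>
      real (t n + 1) = (8 * 4 ^ (n - 1) + 1) / 3 \<and>
      real (t n + 1) = (4 / 9 + 1 / (18 * 4 ^ (n - 1))) * real (card (Ghat_V n)) \<and>
      (4 / 9 + 1 / (18 * 4 ^ (n - 1))) * real (card (Ghat_V n)) \<ge> 4 / 9 * real (card (Ghat_V n))"
proof -
  have tc: "real (t n + 1) = (8 * 4 ^ (n - 1) + 1) / 3"
  proof -
    have "real (3 * (t n + 1)) = real (8 * 4^(n-1) + 1)" by (simp only: t_closed[OF n])
    then have "3 * real (t n + 1) = 8 * (4::real)^(n-1) + 1"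
      by (simp only: of_nat_mult of_nat_add of_nat_power of_nat_numeral of_nat_1)
    then show ?thesis by (simp add: field_simps)
  qed
  have cv: "real (card (Ghat_V n)) = 6 * 4^(n-1)" using cardV[OF n] by simp
  have pos: "(0::real) < 4^(n-1)" by simp
  have e2: "real (t n + 1) = (4 / 9 + 1 / (18 * 4 ^ (n - 1))) * real (card (Ghat_V n))"
    unfolding tc cv using pos by (simp add: field_simps)
  have e3: "(4 / 9 + 1 / (18 * 4 ^ (n - 1))) * real (card (Ghat_V n)) \<ge> 4 / 9 * real (card (Ghat_V n))"
    using pos by (simp add: distrib_right)
  show ?thesis using simple[OF n] connected[OF n] maxdeg[OF n] cardV[OF n] zfn_lower[OF n] tc e2 e3
    by blast
qed

theorem mainTheorem2:
  shows "(\<forall>n\<ge>1.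
      simple_graph (Ghat_V n) (Ghat_E n) \<and>
      connected_graph (Ghat_V n) (Ghat_E n) \<and>
      max_degree (Ghat_V n) (Ghat_E n) = 3 \<and>
      card (Ghat_V n) = 6 * 4 ^ (n - 1) \<and>
      zero_forcing_number (Ghat_V n) (Ghat_E n) \<ge> t n + 1 \<and>
      real (t n + 1) = (8 * 4 ^ (n - 1) + 1) / 3 \<and>
      real (t n + 1) = (4 / 9 + 1 / (18 * 4 ^ (n - 1))) * real (card (Ghat_V n)) \<and>
      (4 / 9 + 1 / (18 * 4 ^ (n - 1))) * real (card (Ghat_V n)) \<ge> 4 / 9 * real (card (Ghat_V n)))
   \<and> \<not> (\<forall>(V :: vtx set) E. simple_graph V E \<and> connected_graph V E \<and> max_degree V E = 3
          \<longrightarrow> real (zero_forcing_number V E) \<le> real (card V) / 3 + 2)"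
  apply (rule conjI)
  using part1 apply blast
proof -
  have p: "2 \<le> (2::nat)" by simp
  have z: "11 \<le> zero_forcing_number (Ghat_V 2) (Ghat_E 2)" using zfn_lower[of 2] by (simp add: eval_nat_numeral)
  have c: "card (Ghat_V 2) = 24" using cardV[of 2] by simp
  show "\<not> (\<forall>(V :: vtx set) E. simple_graph V E \<and> connected_graph V E \<and> max_degree V E = 3
          \<longrightarrow> real (zero_forcing_number V E) \<le> real (card V) / 3 + 2)"
  proof
    assume H: "\<forall>(V :: vtx set) E. simple_graph V E \<and> connected_graph V E \<and> max_degree V E = 3
          \<longrightarrow> real (zero_forcing_number V E) \<le> real (card V) / 3 + 2"
    have "real (zero_forcing_number (Ghat_V 2) (Ghat_E 2)) \<le> real (card (Ghat_V 2)) / 3 + 2"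
      using H simple[of 2] connected[of 2] maxdeg[of 2] by simp
    then have "real (zero_forcing_number (Ghat_V 2) (Ghat_E 2)) \<le> 10" using c by simp
    then show False using z by linarith
  qed
qed


end
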